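(* Any finite group that has a nontrivial quotient of odd order is not mixable.
   Context: For a finite group $G$, a random subproduct is a random element $g_1^{\epsilon_1}\cdots g_k^{\epsilon_k}$ where $g_1,\dots,g_k\in G$ are fixed and $\epsilon_1,\dots,\epsilon_k$ are independent Bernoulli random variables with $\epsilon_i\sim\mathrm{Ber}(p_i)$, $p_i\in[0,1]$. $G$ is called mixable if some random subproduct is distributed exactly uniformly on $G$. *)

theory Defs
  imports "HOL-Algebra.Algebra"
begin

text \<open>The subproduct g_1^e_1 ... g_k^e_k for a list of group elements gs and a
  list of bits es (True = exponent 1, False = exponent 0), multiplied left to right.\<close>
definition subprod :: "('a, 'b) monoid_scheme \<Rightarrow> 'a list \<Rightarrow> bool list \<Rightarrow> 'a" where
  "subprod G gs es =
     foldr (\<lambda>(g, e) acc. (if e then g else \<one>\<^bsub>G\<^esub>) \<otimes>\<^bsub>G\<^esub> acc) (zip gs es) \<one>\<^bsub>G\<^esub>"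

text \<open>Probability of the bit pattern es when the bits are independent with e_i ~ Ber(p_i).\<close>
definition bern_weight :: "real list \<Rightarrow> bool list \<Rightarrow> real" where
  "bern_weight ps es = prod_list (map (\<lambda>(p, e). if e then p else 1 - p) (zip ps es))"

definition subprod_prob :: "('a, 'b) monoid_scheme \<Rightarrow> 'a list \<Rightarrow> real list \<Rightarrow> 'a \<Rightarrow> real" where
  "subprod_prob G gs ps x =
     (\<Sum>es\<in>{es. length es = length gs}. if subprod G gs es = x then bern_weight ps es else 0)"

definition mixable :: "('a, 'b) monoid_scheme \<Rightarrow> bool" where
  "mixable G \<longleftrightarrow>
     (\<exists>gs ps. set gs \<subseteq> carrier G \<and> length ps = length gs \<and>
        (\<forall>p\<in>set ps. 0 \<le> p \<and> p \<le> 1) \<and>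
        (\<forall>x\<in>carrier G. subprod_prob G gs ps x = 1 / real (card (carrier G))))"

end

theory Submission
  imports Defs "HOL-Algebra.Multiplicative_Group"
begin

lemma finite_len: "finite {es::bool list. length es = n}"
  using finite_lists_length_eq[of "UNIV::bool set" n] by simp

lemma sum_len_Suc:
  "(\<Sum>es\<in>{es::bool list. length es = Suc n}. F es) =
   (\<Sum>es\<in>{es. length es = n}. F (True#es)) + (\<Sum>es\<in>{es. length es = n}. F (False#es))"
proof -
  let ?L = "{es::bool list. length es = n}"
  have eq: "{es::bool list. length es = Suc n} = Cons True ` ?L \<union> Cons False ` ?L"
    by (auto simp: length_Suc_conv)
  have "(\<Sum>es\<in>Cons True ` ?L \<union> Cons False ` ?L. F es) =
        (\<Sum>es\<in>Cons True ` ?L. F es) + (\<Sum>es\<in>Cons False ` ?L. F es)"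
    by (rule sum.union_disjoint) (auto simp: finite_len)
  also have "\<dots> = (\<Sum>es\<in>?L. F (True#es)) + (\<Sum>es\<in>?L. F (False#es))"
    by (simp add: sum.reindex)
  finally show ?thesis using eq by simp
qed

lemma subprod_Cons: "subprod G (g#gs) (e#es) = (if e then g else \<one>\<^bsub>G\<^esub>) \<otimes>\<^bsub>G\<^esub> subprod G gs es"
  by (simp add: subprod_def)

lemma bern_weight_Cons: "bern_weight (p#ps) (e#es) = (if e then p else 1 - p) * bern_weight ps es"
  by (simp add: bern_weight_def)

lemma subprod_closed:
  assumes "monoid G" "set gs \<subseteq> carrier G"
  shows "subprod G gs es \<in> carrier G"
  using assms(2)
proof (induction gs arbitrary: es)
  case Nil then show ?case using assms(1) by (simp add: subprod_def monoid.one_closed)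
next
  case (Cons g gs)
  then show ?case
  proof (cases es)
    case Nil then show ?thesis using assms(1) by (simp add: subprod_def monoid.one_closed)
  next
    case (Cons e es')
    then show ?thesis using Cons.IH[of es'] Cons.prems assms(1)
      by (simp add: subprod_Cons monoid.one_closed monoid.m_closed)
  qed
qed

definition Top :: "('a, 'b) monoid_scheme \<Rightarrow> 'a list \<Rightarrow> real list \<Rightarrow> ('a \<Rightarrow> real) \<Rightarrow> 'a \<Rightarrow> real" where
  "Top G gs ps h x = (\<Sum>es\<in>{es. length es = length gs}. bern_weight ps es * h (x \<otimes>\<^bsub>G\<^esub> subprod G gs es))"

lemma Top_Nil: "monoid G \<Longrightarrow> x \<in> carrier G \<Longrightarrow> Top G [] [] h x = h x"
  by (simp add: Top_def subprod_def bern_weight_def)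

lemma Top_Cons:
  assumes "monoid G" "g \<in> carrier G" "set gs \<subseteq> carrier G" "x \<in> carrier G"
  shows "Top G (g#gs) (p#ps) h x = (1 - p) * Top G gs ps h x + p * Top G gs ps h (x \<otimes>\<^bsub>G\<^esub> g)"
proof -
  have a: "x \<otimes>\<^bsub>G\<^esub> (g \<otimes>\<^bsub>G\<^esub> subprod G gs es) = (x \<otimes>\<^bsub>G\<^esub> g) \<otimes>\<^bsub>G\<^esub> subprod G gs es" for es
    using assms subprod_closed[OF assms(1) assms(3)] by (simp add: monoid.m_assoc)
  have b: "x \<otimes>\<^bsub>G\<^esub> (\<one>\<^bsub>G\<^esub> \<otimes>\<^bsub>G\<^esub> subprod G gs es) = x \<otimes>\<^bsub>G\<^esub> subprod G gs es" for es
    using assms subprod_closed[OF assms(1) assms(3)] by (simp add: monoid.l_one)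
  show ?thesis
    unfolding Top_def
    by (simp add: sum_len_Suc subprod_Cons bern_weight_Cons a b sum_distrib_left mult.assoc)
qed

context normal
begin

definition Ninv :: "('a \<Rightarrow> real) \<Rightarrow> bool" where
  "Ninv h \<longleftrightarrow> (\<forall>x\<in>carrier G. \<forall>n\<in>H. h (x \<otimes> n) = h x)"

lemma Top_Ninv:
  assumes "Ninv h" "set gs \<subseteq> carrier G"
  shows "Ninv (Top G gs ps h)"
  unfolding Ninv_def
proof (intro ballI)
  fix x n assume x: "x \<in> carrier G" and n: "n \<in> H"
  have "h (x \<otimes> n \<otimes> subprod G gs es) = h (x \<otimes> subprod G gs es)" for es
  proof -
    let ?s = "subprod G gs es"
    have s: "?s \<in> carrier G" using subprod_closed[OF is_monoid assms(2)] .
    have nG: "n \<in> carrier G" using n subset by blast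
    have xs: "x \<otimes> ?s \<otimes> inv ?s = x" using s x by (simp add: m_assoc)
    have "x \<otimes> n \<otimes> ?s = (x \<otimes> ?s) \<otimes> (inv ?s \<otimes> n \<otimes> ?s)"
      using s nG x xs by (simp add: m_assoc[symmetric])
    moreover have "inv ?s \<otimes> n \<otimes> ?s \<in> H" using inv_op_closed1 s n by blast
    ultimately show ?thesis using assms(1) x s unfolding Ninv_def by simp
  qed
  then show "Top G gs ps h (x \<otimes> n) = Top G gs ps h x"
    unfolding Top_def by simp
qed

lemma A_inj:
  assumes g: "g \<in> carrier G" and gm: "g [^] (m::nat) \<in> H" and m: "odd m"
    and p: "0 \<le> p" "p \<le> 1" and hN: "Ninv h"
    and z: "\<forall>x\<in>carrier G. (1 - p) * h x + p * h (x \<otimes> g) = 0"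
  shows "\<forall>x\<in>carrier G. h x = 0"
proof (cases "p = 0")
  case True then show ?thesis using z by simp
next
  case False
  define c where "c = (1 - p) / p"
  have c0: "c \<ge> 0" using p by (simp add: c_def)
  have step: "h (x \<otimes> g) = - c * h x" if "x \<in> carrier G" for x
  proof -
    have "p * h (x \<otimes> g) = - ((1 - p) * h x)" using z that by (simp add: add_eq_0_iff)
    then show ?thesis using False by (simp add: c_def field_simps)
  qed
  have pw: "h (x \<otimes> g [^] k) = (- c) ^ k * h x" if "x \<in> carrier G" for x k
  proof (induction k)
    case 0 then show ?case using that by simp
  next
    case (Suc k)
    have "x \<otimes> g [^] Suc k = (x \<otimes> g [^] k) \<otimes> g" using that g by (simp add: m_assoc)
    then show ?case using step[of "x \<otimes> g [^] k"] Suc that g by simp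
  qed
  show ?thesis
  proof
    fix x assume x: "x \<in> carrier G"
    have "h x = h (x \<otimes> g [^] m)" using hN gm x unfolding Ninv_def by simp
    also have "\<dots> = - (c ^ m) * h x" using pw[OF x] m by (simp add: power_minus_odd)
    finally have "(1 + c ^ m) * h x = 0" by (simp add: algebra_simps)
    moreover have "1 + c ^ m > 0" using c0 by (simp add: add_pos_nonneg)
    ultimately show "h x = 0" by simp
  qed
qed

lemma Top_inj:
  assumes hN: "Ninv h" and pw: "\<forall>g\<in>carrier G. \<exists>m. odd m \<and> g [^] (m::nat) \<in> H"
  shows "set gs \<subseteq> carrier G \<Longrightarrow> length ps = length gs \<Longrightarrow> (\<forall>p\<in>set ps. 0 \<le> p \<and> p \<le> 1)
     \<Longrightarrow> \<forall>x\<in>carrier G. Top G gs ps h x = 0 \<Longrightarrow> \<forall>x\<in>carrier G. h x = 0"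
proof (induction gs arbitrary: ps)
  case Nil
  then show ?case using Top_Nil[OF is_monoid] by simp
next
  case (Cons g gs)
  then obtain p ps' where ps: "ps = p # ps'" by (cases ps) auto
  let ?F = "Top G gs ps' h"
  have g: "g \<in> carrier G" and gs: "set gs \<subseteq> carrier G" using Cons.prems by auto
  have FN: "Ninv ?F" using Top_Ninv[OF hN gs] .
  obtain m :: nat where m: "odd m" "g [^] m \<in> H" using pw g by blast
  have "\<forall>x\<in>carrier G. (1 - p) * ?F x + p * ?F (x \<otimes> g) = 0"
    using Cons.prems(4) Top_Cons[OF is_monoid g gs] ps by simp
  moreover have p01: "0 \<le> p" "p \<le> 1" using Cons.prems(3) ps by auto
  ultimately have "\<forall>x\<in>carrier G. ?F x = 0"
    using A_inj[OF g m(2) m(1) p01 FN] by blast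
  then show ?case using Cons.IH[of ps'] Cons.prems gs ps by simp
qed

lemma prob_sum:
  assumes gs: "set gs \<subseteq> carrier G" and fin: "finite (carrier G)"
    and u: "\<forall>x\<in>carrier G. subprod_prob G gs ps x = 1 / real (card (carrier G))"
    and y: "y \<in> carrier G"
  shows "(\<Sum>es\<in>{es. length es = length gs}. if y \<otimes> subprod G gs es \<in> H then bern_weight ps es else 0)
        = real (card H) / real (card (carrier G))"
proof -
  let ?C = "{s\<in>carrier G. y \<otimes> s \<in> H}"
  let ?L = "{es::bool list. length es = length gs}"
  have finC: "finite ?C" using fin by simp
  have "(\<Sum>s\<in>?C. subprod_prob G gs ps s) =
        (\<Sum>s\<in>?C. \<Sum>es\<in>?L. if subprod G gs es = s then bern_weight ps es else 0)"
    by (simp add: subprod_prob_def)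
  also have "\<dots> = (\<Sum>es\<in>?L. \<Sum>s\<in>?C. if subprod G gs es = s then bern_weight ps es else 0)"
    by (rule sum.swap)
  also have "\<dots> = (\<Sum>es\<in>?L. if y \<otimes> subprod G gs es \<in> H then bern_weight ps es else 0)"
    using subprod_closed[OF is_monoid gs] finC
    by (intro sum.cong refl) (simp add: sum.delta)
  finally have e1: "(\<Sum>es\<in>?L. if y \<otimes> subprod G gs es \<in> H then bern_weight ps es else 0)
      = (\<Sum>s\<in>?C. subprod_prob G gs ps s)" by simp
  have "bij_betw (\<lambda>s. y \<otimes> s) ?C H"
  proof (rule bij_betwI[where g = "\<lambda>n. inv y \<otimes> n"])
    show "(\<lambda>s. y \<otimes> s) \<in> ?C \<rightarrow> H" by auto
    show "(\<lambda>n. inv y \<otimes> n) \<in> H \<rightarrow> ?C" using y subset by (auto simp: m_assoc[symmetric])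
    show "inv y \<otimes> (y \<otimes> x) = x" if "x \<in> ?C" for x using that y by (simp add: m_assoc[symmetric])
    show "y \<otimes> (inv y \<otimes> x) = x" if "x \<in> H" for x using that y subset by (auto simp: m_assoc[symmetric])
  qed
  then have cc: "card ?C = card H" by (rule bij_betw_same_card)
  have "(\<Sum>s\<in>?C. subprod_prob G gs ps s) = real (card ?C) * (1 / real (card (carrier G)))"
    using u by simp
  then show ?thesis using e1 cc by simp
qed

end

lemma (in normal) main_aux:
  assumes fin: "finite (carrier G)" and NG: "H \<noteq> carrier G" and odd: "odd (card (carrier (G Mod H)))"
    and gs: "set gs \<subseteq> carrier G" and len: "length ps = length gs"
    and p: "\<forall>p\<in>set ps. 0 \<le> p \<and> p \<le> 1"
    and u: "\<forall>x\<in>carrier G. subprod_prob G gs ps x = 1 / real (card (carrier G))"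
  shows False
proof -
  have Gr: "group (G Mod H)" by (rule factorgroup_is_group)
  have pw: "\<forall>g\<in>carrier G. \<exists>m. odd m \<and> g [^] (m::nat) \<in> H"
  proof
    fix g assume g: "g \<in> carrier G"
    let ?m = "card (carrier (G Mod H))"
    have gc: "H #> g \<in> carrier (G Mod H)" unfolding carrier_FactGroup using g by (rule imageI)
    have e1: "H #> (g [^] ?m) = (H #> g) [^]\<^bsub>G Mod H\<^esub> ?m"
      by (rule hom_nat_pow[OF r_coset_hom_Mod g group_axioms Gr])
    have e2: "(H #> g) [^]\<^bsub>G Mod H\<^esub> ?m = H"
      using group.pow_order_eq_1[OF Gr gc] unfolding order_def one_FactGroup .
    have "g [^] ?m \<in> H"
      by (rule coset_join1[OF _ nat_pow_closed[OF g] subgroup_axioms]) (simp only: e1 e2)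
    then show "\<exists>m::nat. odd m \<and> g [^] m \<in> H" using odd by (intro exI[of _ ?m]) simp
  qed
  obtain a where a: "a \<in> carrier G" "a \<notin> H" using NG subset by blast
  define h where "h = (\<lambda>z. (if z \<in> H then 1 else 0) - (if inv a \<otimes> z \<in> H then 1 else (0::real)))"
  have hN: "Ninv h"
    unfolding Ninv_def h_def
  proof (intro ballI)
    fix x n assume x: "x \<in> carrier G" and n: "n \<in> H"
    have nG: "n \<in> carrier G" using n subset by blast
    have c: "y \<otimes> n \<in> H \<longleftrightarrow> y \<in> H" if y: "y \<in> carrier G" for y
    proof
      assume "y \<otimes> n \<in> H"
      then have "y \<otimes> n \<otimes> inv n \<in> H" using n by (simp add: m_closed m_inv_closed)
      moreover have "y \<otimes> n \<otimes> inv n = y" using y nG by (simp add: m_assoc)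
      ultimately show "y \<in> H" by simp
    next
      assume "y \<in> H" then show "y \<otimes> n \<in> H" using n by (simp add: m_closed)
    qed
    have 1: "x \<otimes> n \<in> H \<longleftrightarrow> x \<in> H" using c x by simp
    have 2: "inv a \<otimes> (x \<otimes> n) \<in> H \<longleftrightarrow> inv a \<otimes> x \<in> H"
      using c[of "inv a \<otimes> x"] x a(1) nG by (simp add: m_assoc)
    show "(if x \<otimes> n \<in> H then 1 else 0) - (if inv a \<otimes> (x \<otimes> n) \<in> H then 1 else 0) =
          (if x \<in> H then 1 else 0) - (if inv a \<otimes> x \<in> H then 1 else (0::real))"
      using 1 2 by simp
  qed
  have T0: "\<forall>x\<in>carrier G. Top G gs ps h x = 0"
  proof
    fix x assume x: "x \<in> carrier G"
    have "Top G gs ps h x =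
      (\<Sum>es\<in>{es. length es = length gs}. if x \<otimes> subprod G gs es \<in> H then bern_weight ps es else 0)
      - (\<Sum>es\<in>{es. length es = length gs}. if (inv a \<otimes> x) \<otimes> subprod G gs es \<in> H then bern_weight ps es else 0)"
      unfolding Top_def h_def sum_subtractf[symmetric]
    proof (intro sum.cong refl)
      fix es
      have "subprod G gs es \<in> carrier G" using subprod_closed[OF is_monoid gs] .
      then show "bern_weight ps es * ((if x \<otimes> subprod G gs es \<in> H then 1 else 0) -
          (if inv a \<otimes> (x \<otimes> subprod G gs es) \<in> H then 1 else 0)) =
        (if x \<otimes> subprod G gs es \<in> H then bern_weight ps es else 0) -
        (if inv a \<otimes> x \<otimes> subprod G gs es \<in> H then bern_weight ps es else 0)"
        using x a(1) by (simp add: m_assoc)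
    qed
    also have "\<dots> = 0"
      using prob_sum[OF gs fin u x] prob_sum[OF gs fin u, of "inv a \<otimes> x"] x a(1) by simp
    finally show "Top G gs ps h x = 0" .
  qed
  have "\<forall>x\<in>carrier G. h x = 0" using Top_inj[OF hN pw gs len p T0] .
  then have "h \<one> = 0" by simp
  moreover have "inv a \<notin> H"
  proof
    assume "inv a \<in> H" then have "inv (inv a) \<in> H" by (rule m_inv_closed)
    then show False using a by simp
  qed
  then have "h \<one> = 1" using a by (simp add: h_def one_closed)
  ultimately show False by simp
qed

theorem mainTheorem2:
  fixes G :: "('a, 'b) monoid_scheme"
  assumes "group G" and "finite (carrier G)"
    and "\<exists>N. N \<lhd> G \<and> N \<noteq> carrier G \<and> odd (card (carrier (G Mod N)))"
  shows "\<not> mixable G"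
proof
  assume "mixable G"
  then obtain gs ps where gs: "set gs \<subseteq> carrier G" and len: "length ps = length gs"
    and p: "\<forall>p\<in>set ps. 0 \<le> p \<and> p \<le> 1"
    and u: "\<forall>x\<in>carrier G. subprod_prob G gs ps x = 1 / real (card (carrier G))"
    unfolding mixable_def by blast
  obtain N where N: "N \<lhd> G" and NG: "N \<noteq> carrier G" and odd: "odd (card (carrier (G Mod N)))"
    using assms(3) by blast
  show False using normal.main_aux[OF N assms(2) NG odd gs len p u] .
qed

end
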